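(* Let $u\in\mathbb{R}^3$ with $\kappa(u)>2$. Then there exists $\gamma\in\Gamma$ such that $\tilde u=\gamma u=(\tilde x,\tilde y,\tilde z)$ satisfies either $\tilde u\in(-\infty,-2]^3$, or $\tilde x\in[-2,2]$. (In the first case $\tilde u$ is the character of a Fuchsian representation whose quotient is a hyperbolic three-holed sphere, with boundary corresponding to cusps or closed geodesics; in the second, $\tilde u$ is the character of a representation mapping $X$ to a non-hyperbolic element.)
   Context: $\kappa(x,y,z)=x^2+y^2+z^2-xyz-2$. $\Gamma$ denotes the group of polynomial automorphisms of $\mathbb{C}^3$ generated by: all permutations of the coordinates $x,y,z$; the three sign changes $(x,y,z)\mapsto(x,-y,-z)$, $(x,y,z)\mapsto(-x,y,-z)$, $(x,y,z)\mapsto(-x,-y,z)$; and the quadratic reflection $(x,y,z)\mapsto(yz-x,y,z)$. Every element of $\Gamma$ preserves $\kappa$ and maps $\mathbb{R}^3$ to itself. A point $(x,y,z)$ is viewed as the character $(\mathrm{tr}\rho(X),\mathrm{tr}\rho(Y),\mathrm{tr}\rho(XY))$ of a representation $\rho$ of the free group $\langle X,Y\rangle$ into $\mathrm{SL}(2,\mathbb{C})$. *)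

theory Defs
  imports Complex_Main
begin

type_synonym pt = "complex \<times> complex \<times> complex"

definition kappa :: "pt \<Rightarrow> complex" where
  "kappa p = (case p of (x,y,z) \<Rightarrow> x^2 + y^2 + z^2 - x*y*z - 2)"

definition gen_maps :: "(pt \<Rightarrow> pt) set" where
  "gen_maps =
    { (\<lambda>(x,y,z). (y,x,z)), (\<lambda>(x,y,z). (x,z,y)), (\<lambda>(x,y,z). (z,y,x)),
      (\<lambda>(x,y,z). (y,z,x)), (\<lambda>(x,y,z). (z,x,y)),
      (\<lambda>(x,y,z). (x,-y,-z)), (\<lambda>(x,y,z). (-x,y,-z)), (\<lambda>(x,y,z). (-x,-y,z)),
      (\<lambda>(x,y,z). (y*z - x, y, z)) }"

text \<open>All generators are
  bijections whose inverses are again words in the generators (each is an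
  involution or a product of transpositions), so the group is the closure of
  the identity under composition with generators; we also close under inverses
  explicitly for fidelity.\<close>
inductive_set Gamma :: "(pt \<Rightarrow> pt) set" where
  Gamma_id: "id \<in> Gamma"
| Gamma_gen: "g \<in> gen_maps \<Longrightarrow> g \<in> Gamma"
| Gamma_comp: "f \<in> Gamma \<Longrightarrow> g \<in> Gamma \<Longrightarrow> f \<circ> g \<in> Gamma"
| Gamma_inv: "f \<in> Gamma \<Longrightarrow> bij f \<Longrightarrow> inv f \<in> Gamma"

definition real_pt :: "real \<times> real \<times> real \<Rightarrow> pt" where
  "real_pt p = (case p of (x,y,z) \<Rightarrow> (complex_of_real x, complex_of_real y, complex_of_real z))"

end

theory Submission
  imports Defs
begin

definition goodr :: "real \<Rightarrow> real \<Rightarrow> real \<Rightarrow> bool" where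
  "goodr x y z \<longleftrightarrow> (\<exists>\<gamma>\<in>Gamma. \<exists>x' y' z' :: real.
           \<gamma> (real_pt (x,y,z)) = real_pt (x',y',z') \<and>
           ((x' \<le> -2 \<and> y' \<le> -2 \<and> z' \<le> -2) \<or> (-2 \<le> x' \<and> x' \<le> 2)))"

lemma goodr_base1: "-2 \<le> x \<Longrightarrow> x \<le> 2 \<Longrightarrow> goodr x y z"
  unfolding goodr_def by (rule bexI[of _ id]) (auto intro: Gamma_id)

lemma goodr_base2: "x \<le> -2 \<Longrightarrow> y \<le> -2 \<Longrightarrow> z \<le> -2 \<Longrightarrow> goodr x y z"
  unfolding goodr_def by (rule bexI[of _ id]) (auto intro: Gamma_id)

lemma goodr_transfer:
  assumes "g \<in> gen_maps" "g (real_pt (x,y,z)) = real_pt (a,b,c)" "goodr a b c"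
  shows "goodr x y z"
proof -
  from assms(3) obtain \<gamma> x' y' z' where g: "\<gamma> \<in> Gamma"
    "\<gamma> (real_pt (a,b,c)) = real_pt (x',y',z')"
    "((x' \<le> -2 \<and> y' \<le> -2 \<and> z' \<le> -2) \<or> (-2 \<le> x' \<and> x' \<le> 2))"
    unfolding goodr_def by blast
  have "\<gamma> \<circ> g \<in> Gamma" by (rule Gamma_comp[OF g(1) Gamma_gen[OF assms(1)]])
  moreover have "(\<gamma> \<circ> g) (real_pt (x,y,z)) = real_pt (x',y',z')" using assms(2) g(2) by simp
  ultimately show ?thesis using g(3) unfolding goodr_def by blast
qed

lemma g_swap12: "goodr y x z \<Longrightarrow> goodr x y z"
  by (rule goodr_transfer[of "\<lambda>(x,y,z). (y,x,z)"]) (auto simp: gen_maps_def real_pt_def)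
lemma g_swap23: "goodr x z y \<Longrightarrow> goodr x y z"
  by (rule goodr_transfer[of "\<lambda>(x,y,z). (x,z,y)"]) (auto simp: gen_maps_def real_pt_def)
lemma g_swap13: "goodr z y x \<Longrightarrow> goodr x y z"
  by (rule goodr_transfer[of "\<lambda>(x,y,z). (z,y,x)"]) (auto simp: gen_maps_def real_pt_def)
lemma g_neg23: "goodr x (-y) (-z) \<Longrightarrow> goodr x y z"
  by (rule goodr_transfer[of "\<lambda>(x,y,z). (x,-y,-z)"]) (auto simp: gen_maps_def real_pt_def)
lemma g_neg13: "goodr (-x) y (-z) \<Longrightarrow> goodr x y z"
  by (rule goodr_transfer[of "\<lambda>(x,y,z). (-x,y,-z)"]) (auto simp: gen_maps_def real_pt_def)
lemma g_neg12: "goodr (-x) (-y) z \<Longrightarrow> goodr x y z"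
  by (rule goodr_transfer[of "\<lambda>(x,y,z). (-x,-y,z)"]) (auto simp: gen_maps_def real_pt_def)
lemma g_refl: "goodr (y*z - x) y z \<Longrightarrow> goodr x y z"
  by (rule goodr_transfer[of "\<lambda>(x,y,z). (y*z - x, y, z)"]) (auto simp: gen_maps_def real_pt_def)

definition kr :: "real \<Rightarrow> real \<Rightarrow> real \<Rightarrow> real" where
  "kr x y z = x^2 + y^2 + z^2 - x*y*z"

lemma kr_sym: "kr y x z = kr x y z" "kr x z y = kr x y z" "kr z y x = kr x y z"
  unfolding kr_def by (simp_all add: algebra_simps)

lemma step_key:
  fixes x y z c :: real
  assumes "x \<ge> y" "y \<ge> z" "z > 2" "kr x y z = c" "c > 4"
  shows "2*x - y*z \<ge> sqrt (4*(c-4))"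
proof -
  have f: "x^2 - y*z*x + y^2 + z^2 - c = 0" using assms(4) unfolding kr_def by (simp add: power2_eq_square algebra_simps)
  have fy: "y^2 - y*z*y + y^2 + z^2 - c < 0"
  proof -
    have "y^2*(2-z) \<le> z^2*(2-z)"
      using assms by (intro mult_right_mono_neg power_mono) auto
    moreover have "z^2*(2-z) + z^2 \<le> 4"
    proof -
      have "4 - (z^2*(2-z) + z^2) = (z-2)^2*(z+1)" by (simp add: power2_eq_square algebra_simps)
      moreover have "(z-2)^2*(z+1) \<ge> 0" using assms by simp
      ultimately show ?thesis by linarith
    qed
    ultimately show ?thesis using assms(5) by (simp add: power2_eq_square algebra_simps) 
  qed
  have pos: "2*x - y*z > 0"
  proof (rule ccontr)
    assume "\<not> ?thesis"
    hence "y + x - y*z \<le> 0" using assms by linarith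
    moreover have "y - x \<le> 0" using assms by simp
    ultimately have "(y-x)*(y+x-y*z) \<ge> 0" by (simp add: mult_nonpos_nonpos)
    moreover have "(y-x)*(y+x-y*z) = (y^2 - y*z*y + y^2 + z^2 - c) - (x^2 - y*z*x + y^2 + z^2 - c)"
      by (simp add: power2_eq_square algebra_simps)
    ultimately show False using f fy by linarith
  qed
  have sq: "(2*x - y*z)^2 = (y^2-4)*(z^2-4) + 4*(c-4)"
    using f by (simp add: power2_eq_square algebra_simps)
  have "(y^2-4)*(z^2-4) \<ge> 0"
  proof -
    have "z^2 \<ge> 4" using assms power_mono[of 2 z 2] by simp
    moreover have "y^2 \<ge> 4" using assms power_mono[of 2 y 2] by simp
    ultimately show ?thesis by simp
  qed
  hence "4*(c-4) \<le> (2*x - y*z)^2" using sq by linarith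
  hence "sqrt (4*(c-4)) \<le> sqrt ((2*x - y*z)^2)" by (rule real_sqrt_le_mono)
  thus ?thesis using pos by simp
qed

lemma core_sorted:
  fixes c :: real
  assumes c: "c > 4"
    and IH: "\<And>a b d. a > 2 \<Longrightarrow> b > 2 \<Longrightarrow> d > 2 \<Longrightarrow> kr a b d = c \<Longrightarrow>
              a + b + d < S - sqrt (4*(c-4)) \<Longrightarrow> goodr a b d"
    and "x \<ge> y" "y \<ge> z" "z > 2" "kr x y z = c" "x + y + z < S"
  shows "goodr x y z"
proof (rule g_refl)
  let ?x = "y*z - x"
  have k: "2*x - y*z \<ge> sqrt (4*(c-4))" using step_key assms by blast
  have kk: "kr ?x y z = c" using assms(6) unfolding kr_def by (simp add: power2_eq_square algebra_simps)
  consider "?x > 2" | "-2 \<le> ?x \<and> ?x \<le> 2" | "?x < -2" by linarith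
  then show "goodr ?x y z"
  proof cases
    case 1
    then show ?thesis using IH[OF 1 _ _ kk] assms k by linarith
  next
    case 2
    then show ?thesis by (intro goodr_base1) auto
  next
    case 3
    show ?thesis by (rule g_neg23, rule goodr_base2) (use 3 assms in auto)
  qed
qed

lemma core_all:
  fixes c :: real
  assumes c: "c > 4"
    and IH: "\<And>a b d. a > 2 \<Longrightarrow> b > 2 \<Longrightarrow> d > 2 \<Longrightarrow> kr a b d = c \<Longrightarrow>
              a + b + d < S - sqrt (4*(c-4)) \<Longrightarrow> goodr a b d"
    and "x > 2" "y > 2" "z > 2" "kr x y z = c" "x + y + z < S"
  shows "goodr x y z"
proof -
  note cs = core_sorted[OF c IH]
  have ks: "kr y x z = c" "kr x z y = c" "kr z y x = c" "kr y z x = c" "kr z x y = c"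
    using assms(6) kr_sym by (metis)+
  consider "x \<ge> y" "y \<ge> z" | "x \<ge> z" "z \<ge> y" | "y \<ge> x" "x \<ge> z" | "y \<ge> z" "z \<ge> x"
    | "z \<ge> x" "x \<ge> y" | "z \<ge> y" "y \<ge> x" by linarith
  then show ?thesis
  proof cases
    case 1 show ?thesis by (rule cs) (use 1 assms ks in auto)
  next
    case 2 show ?thesis by (rule g_swap23, rule cs) (use 2 assms ks in auto)
  next
    case 3 show ?thesis by (rule g_swap12, rule cs) (use 3 assms ks in auto)
  next
    case 4 show ?thesis by (rule g_swap12, rule g_swap23, rule cs) (use 4 assms ks in auto)
  next
    case 5 show ?thesis by (rule g_swap23, rule g_swap12, rule cs) (use 5 assms ks in auto)
  next
    case 6 show ?thesis by (rule g_swap13, rule cs) (use 6 assms ks in auto)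
  qed
qed

lemma core:
  fixes c :: real
  assumes c: "c > 4"
  shows "\<forall>x y z. x > 2 \<longrightarrow> y > 2 \<longrightarrow> z > 2 \<longrightarrow> kr x y z = c \<longrightarrow>
           x + y + z < real n * sqrt (4*(c-4)) \<longrightarrow> goodr x y z"
proof (induction n)
  case 0
  then show ?case by auto
next
  case (Suc n)
  show ?case
  proof (intro allI impI)
    fix x y z assume h: "x > 2" "y > 2" "z > 2" "kr x y z = c"
      "x + y + z < real (Suc n) * sqrt (4*(c-4))"
    show "goodr x y z"
    proof (rule core_all[OF c _ h(1-4), of "real (Suc n) * sqrt (4*(c-4))"])
      fix a b d assume "a > 2" "b > 2" "d > 2" "kr a b d = c"
        "a + b + d < real (Suc n) * sqrt (4*(c-4)) - sqrt (4*(c-4))"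
      then show "goodr a b d" using Suc.IH by (auto simp: algebra_simps)
    qed (use h in auto)
  qed
qed

lemma core_final:
  fixes x y z :: real
  assumes "x > 2" "y > 2" "z > 2" "kr x y z > 4"
  shows "goodr x y z"
proof -
  let ?c = "kr x y z"
  have "sqrt (4*(?c-4)) > 0" using assms by simp
  then obtain n where "real n * sqrt (4*(?c-4)) > x + y + z"
    using reals_Archimedean3 by blast
  thus ?thesis using core[OF assms(4), of n] assms by blast
qed

theorem mainTheorem10:
  fixes x y z :: real
  assumes "Re (kappa (real_pt (x,y,z))) > 2"
  shows "\<exists>\<gamma>\<in>Gamma. \<exists>x' y' z' :: real.
           \<gamma> (real_pt (x,y,z)) = real_pt (x',y',z') \<and>
           ((x' \<le> -2 \<and> y' \<le> -2 \<and> z' \<le> -2) \<or> (-2 \<le> x' \<and> x' \<le> 2))"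
proof -
  have E: "kappa (real_pt (x,y,z)) = complex_of_real (kr x y z - 2)"
    by (simp add: kappa_def real_pt_def kr_def)
  have K: "kr x y z > 4" using assms unfolding E by simp
  have "goodr x y z"
  proof (cases "\<bar>x\<bar> \<le> 2 \<or> \<bar>y\<bar> \<le> 2 \<or> \<bar>z\<bar> \<le> 2")
    case True
    then consider "\<bar>x\<bar> \<le> 2" | "\<bar>y\<bar> \<le> 2" | "\<bar>z\<bar> \<le> 2" by blast
    then show ?thesis
    proof cases
      case 1 show ?thesis by (rule goodr_base1) (use 1 in linarith)+
    next
      case 2 show ?thesis by (rule g_swap12, rule goodr_base1) (use 2 in linarith)+
    next
      case 3 show ?thesis by (rule g_swap13, rule goodr_base1) (use 3 in linarith)+
    qed
  next
    case False
    have k1: "kr x (-y) (-z) = kr x y z" "kr (-x) y (-z) = kr x y z" "kr (-x) (-y) z = kr x y z"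
      unfolding kr_def by (simp_all add: power2_eq_square)
    have sx: "x > 2 \<or> x < -2" and sy: "y > 2 \<or> y < -2" and sz: "z > 2 \<or> z < -2"
      using False by linarith+
    consider "x > 2" "y > 2" "z > 2" | "x < -2" "y < -2" "z < -2"
      | "x > 2" "y < -2" "z < -2" | "x < -2" "y > 2" "z < -2" | "x < -2" "y < -2" "z > 2"
      | "x < -2" "y > 2" "z > 2" | "x > 2" "y < -2" "z > 2" | "x > 2" "y > 2" "z < -2"
      using sx sy sz by blast
    then show ?thesis
    proof cases
      case 1 then show ?thesis using core_final K by blast
    next
      case 2 show ?thesis by (rule goodr_base2) (use 2 in linarith)+
    next
      case 3 show ?thesis by (rule g_neg23, rule core_final) (use 3 K k1 in auto)
    next
      case 4 show ?thesis by (rule g_neg13, rule core_final) (use 4 K k1 in auto)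
    next
      case 5 show ?thesis by (rule g_neg12, rule core_final) (use 5 K k1 in auto)
    next
      case 6 show ?thesis by (rule g_neg23, rule goodr_base2) (use 6 in auto)
    next
      case 7 show ?thesis by (rule g_neg13, rule goodr_base2) (use 7 in auto)
    next
      case 8 show ?thesis by (rule g_neg12, rule goodr_base2) (use 8 in auto)
    qed
  qed
  then show ?thesis unfolding goodr_def .
qed

end
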